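(* Let $\mathcal{F}$ be a Furstenberg family. Every dynamical system $(X,T)$ is dynamically compact with respect to $\mathcal{F}$ if and only if $\mathcal{F}$ has the finite intersection property.
   Context: A dynamical system $(X,T)$ consists of a compact metric space $X$ with more than one point and without isolated points, and a continuous surjection $T:X\to X$. A (Furstenberg) family is a collection $\mathcal{F}$ of subsets of $\mathbb{Z}_+=\{0,1,2,\dots\}$ that is hereditary upward ($F_1\subset F_2$, $F_1\in\mathcal{F}$ imply $F_2\in\mathcal{F}$). For $F\subset\mathbb{Z}_+$ and $x\in X$ let $T^Fx=\{T^ix:i\in F\}$. The $\omega_{\mathcal{F}}$-limit set of $x$ is $\omega_{\mathcal{F}}(x)=\bigcap_{F\in\mathcal{F}}\overline{T^Fx}$. The system $(X,T)$ is dynamically compact with respect to $\mathcal{F}$ if $\omega_{\mathcal{F}}(x)\neq\varnothing$ for all $x\in X$. $\mathcal{F}$ has the finite intersection property if the intersection of any finitely many elements of $\mathcal{F}$ is nonempty. *)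

theory Defs
  imports "HOL-Analysis.Analysis"
begin

definition furstenberg_family :: "nat set set \<Rightarrow> bool" where
  "furstenberg_family \<F> \<longleftrightarrow> (\<forall>A B. A \<subseteq> B \<longrightarrow> A \<in> \<F> \<longrightarrow> B \<in> \<F>)"

definition has_fip :: "nat set set \<Rightarrow> bool" where
  "has_fip \<F> \<longleftrightarrow> (\<forall>\<G>. finite \<G> \<longrightarrow> \<G> \<noteq> {} \<longrightarrow> \<G> \<subseteq> \<F> \<longrightarrow> \<Inter>\<G> \<noteq> {})"

definition dynamical_system :: "'a::metric_space set \<Rightarrow> ('a \<Rightarrow> 'a) \<Rightarrow> bool" where
  "dynamical_system X T \<longleftrightarrow>
     compact X \<and> (\<exists>x\<in>X. \<exists>y\<in>X. x \<noteq> y) \<and> (\<forall>x\<in>X. x islimpt X) \<and>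
     continuous_on X T \<and> T ` X = X"

definition orbit_along :: "('a \<Rightarrow> 'a) \<Rightarrow> nat set \<Rightarrow> 'a \<Rightarrow> 'a set" where
  "orbit_along T F x = {(T ^^ i) x | i. i \<in> F}"

definition omega_F :: "nat set set \<Rightarrow> 'a::metric_space set \<Rightarrow> ('a \<Rightarrow> 'a) \<Rightarrow> 'a \<Rightarrow> 'a set" where
  "omega_F \<F> X T x = X \<inter> (\<Inter>F\<in>\<F>. closure (orbit_along T F x))"

definition dynamically_compact :: "nat set set \<Rightarrow> 'a::metric_space set \<Rightarrow> ('a \<Rightarrow> 'a) \<Rightarrow> bool" where
  "dynamically_compact \<F> X T \<longleftrightarrow> (\<forall>x\<in>X. omega_F \<F> X T x \<noteq> {})"

end

theory Submission
  imports Defs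
begin

lemma part1:
  fixes X :: "'a::metric_space set"
  assumes fip: "has_fip \<F>" and ds: "dynamical_system X T"
  shows "dynamically_compact \<F> X T"
  unfolding dynamically_compact_def
proof
  fix x assume x: "x \<in> X"
  have cX: "compact X" and TX: "T ` X = X" and ne: "X \<noteq> {}"
    using ds unfolding dynamical_system_def by auto
  have it: "(T ^^ i) x \<in> X" for i
    by (induction i) (use x TX in auto)
  let ?A = "(\<lambda>F. closure (orbit_along T F x)) ` \<F>"
  have "X \<inter> \<Inter>?A \<noteq> {}"
  proof (rule compact_fip[THEN iffD1, OF cX, rule_format])
    show "\<And>a. a \<in> ?A \<Longrightarrow> closed a" by auto
  next
    fix B assume B: "B \<subseteq> ?A" "finite B"
    then obtain G where G: "G \<subseteq> \<F>" "finite G" "B = (\<lambda>F. closure (orbit_along T F x)) ` G"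
      by (meson finite_subset_image)
    show "X \<inter> \<Inter>B \<noteq> {}"
    proof (cases "G = {}")
      case True then show ?thesis using G ne by auto
    next
      case False
      then obtain i where i: "i \<in> \<Inter>G" using fip G unfolding has_fip_def by blast
      have "(T ^^ i) x \<in> X \<inter> \<Inter>B"
        using i it G(3) closure_subset unfolding orbit_along_def by fastforce
      then show ?thesis by blast
    qed
  qed
  then show "omega_F \<F> X T x \<noteq> {}" unfolding omega_F_def by simp
qed

lemma iter_shift: "((\<lambda>y::nat\<Rightarrow>real. \<lambda>k. y (Suc k)) ^^ i) x = (\<lambda>k. x (k + i))"
  by (induction i) auto

lemma part2:
  assumes H: "\<forall>(X :: (nat \<Rightarrow> real) set) T. dynamical_system X T \<longrightarrow> dynamically_compact \<F> X T"
  shows "has_fip \<F>"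
proof (rule ccontr)
  assume "\<not> has_fip \<F>"
  then obtain G where G: "finite G" "G \<noteq> {}" "G \<subseteq> \<F>" "\<Inter>G = {}"
    unfolding has_fip_def by blast
  obtain h where h: "bij_betw h G {0..<card G}" using ex_bij_betw_finite_nat[OF G(1)] by blast
  have cG: "card G \<ge> 1" using G by (simp add: Suc_leI card_gt_0_iff)
  define M where "M = real (card G)"
  have M1: "M \<ge> 1" using cG unfolding M_def by simp
  define c where "c k = (SOME F. F \<in> G \<and> k \<notin> F)" for k
  have c: "c k \<in> G \<and> k \<notin> c k" for k
  proof -
    have "\<exists>F. F \<in> G \<and> k \<notin> F" using G(4) by blast
    then show ?thesis unfolding c_def by (rule someI_ex)
  qed
  define X where "X = {y::nat\<Rightarrow>real. \<forall>k. y k \<in> {0..M}}"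
  define T where "T = (\<lambda>y::nat\<Rightarrow>real. \<lambda>k. y (Suc k))"
  have XPi: "X = PiE UNIV (\<lambda>_. {0..M})" unfolding X_def by (auto simp: PiE_def)
  have "compactin (product_topology (\<lambda>i. euclidean) UNIV) X"
    unfolding XPi by (subst compactin_PiE) auto
  then have cX: "compact X" by (simp add: euclidean_product_topology)
  have "connectedin (product_topology (\<lambda>i. euclidean) UNIV) X"
    unfolding XPi by (subst connectedin_PiE) auto
  then have conX: "connected X" by (simp add: euclidean_product_topology)
  have p0: "(\<lambda>_. 0) \<in> X" and p1: "(\<lambda>_. 1) \<in> X" using M1 unfolding X_def by auto
  have "(\<lambda>_::nat. 0::real) \<noteq> (\<lambda>_. 1)" by (metis zero_neq_one)
  have nsing: "X \<noteq> {a}" for a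
  proof
    assume "X = {a}"
    then have "(\<lambda>_::nat. 0::real) = (\<lambda>_. 1)" using p0 p1 by simp
    then show False using \<open>(\<lambda>_::nat. 0::real) \<noteq> (\<lambda>_. 1)\<close> by blast
  qed
  have contT: "continuous_on X T"
    unfolding T_def by (intro continuous_on_coordinatewise_then_product continuous_on_subset[OF continuous_on_product_coordinates]) auto
  have TX: "T ` X = X"
  proof
    show "T ` X \<subseteq> X" unfolding T_def X_def by auto
    show "X \<subseteq> T ` X"
    proof
      fix y assume y: "y \<in> X"
      define z where "z = (\<lambda>k. case k of 0 \<Rightarrow> 0 | Suc j \<Rightarrow> y j)"
      have "z \<in> X" using y M1 unfolding z_def X_def by (auto split: nat.split)
      moreover have "y = T z" unfolding z_def T_def by simp
      ultimately show "y \<in> T ` X" by blast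
    qed
  qed
  have ds: "dynamical_system X T"
    unfolding dynamical_system_def
  proof (intro conjI)
    show "\<exists>x\<in>X. \<exists>y\<in>X. x \<noteq> y"
      using p0 p1 \<open>(\<lambda>_::nat. 0::real) \<noteq> (\<lambda>_. 1)\<close> by blast
    show "\<forall>x\<in>X. x islimpt X"
    proof
      fix a assume "a \<in> X"
      show "a islimpt X" by (rule connected_imp_perfect[OF conX \<open>a \<in> X\<close> nsing])
    qed
  qed (use cX contT TX in auto)
  define x where "x = (\<lambda>k. real (h (c k)))"
  have hG: "h F < card G" if "F \<in> G" for F using h that by (auto simp: bij_betw_def)
  have xX: "x \<in> X" unfolding x_def X_def M_def using hG c by (auto simp: less_imp_le)
  have dc: "dynamically_compact \<F> X T" using H ds by simp
  then have "omega_F \<F> X T x \<noteq> {}" using xX unfolding dynamically_compact_def by blast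
  then obtain z where "z \<in> omega_F \<F> X T x" by blast
  then have z: "\<And>F. F \<in> \<F> \<Longrightarrow> z \<in> closure (orbit_along T F x)"
    unfolding omega_F_def by blast
  have key: "\<exists>F'\<in>G - {F}. z 0 = real (h F')" if F: "F \<in> G" for F
  proof -
    let ?S = "{y::nat\<Rightarrow>real. y 0 \<in> (\<lambda>F'. real (h F')) ` (G - {F})}"
    have "closed ?S"
    proof -
      have "closed ((\<lambda>F'. real (h F')) ` (G - {F}))" using G(1) by (intro finite_imp_closed) auto
      then have "closed ((\<lambda>y::nat\<Rightarrow>real. y 0) -` ((\<lambda>F'. real (h F')) ` (G - {F})))"
        by (intro closed_vimage continuous_on_product_coordinates)
      then show ?thesis by (simp add: vimage_def)
    qed
    moreover have "orbit_along T F x \<subseteq> ?S"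
    proof
      fix y assume "y \<in> orbit_along T F x"
      then obtain i where i: "i \<in> F" "y = (T ^^ i) x" unfolding orbit_along_def by blast
      have "y 0 = real (h (c i))" using i unfolding T_def iter_shift x_def by simp
      moreover have "c i \<in> G - {F}" using c[of i] i by auto
      ultimately show "y \<in> ?S" by blast
    qed
    ultimately have "closure (orbit_along T F x) \<subseteq> ?S" by (rule closure_minimal[rotated])
    with z[of F] F G(3) show ?thesis by blast
  qed
  obtain F0 where F0: "F0 \<in> G" using G(2) by blast
  obtain F1 where F1: "F1 \<in> G - {F0}" "z 0 = real (h F1)" using key[OF F0] by blast
  obtain F2 where F2: "F2 \<in> G - {F1}" "z 0 = real (h F2)" using key[of F1] F1 by blast
  have "h F1 = h F2" using F1 F2 by simp
  then have "F1 = F2" using h F1 F2 unfolding bij_betw_def by (meson DiffD1 inj_onD)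
  then show False using F2 by blast
qed

theorem theorem3p1:
  fixes \<F> :: "nat set set"
  assumes "furstenberg_family \<F>"
  shows "(has_fip \<F> \<longrightarrow>
            (\<forall>(X :: 'a::metric_space set) T. dynamical_system X T \<longrightarrow> dynamically_compact \<F> X T))
       \<and> ((\<forall>(X :: (nat \<Rightarrow> real) set) T. dynamical_system X T \<longrightarrow> dynamically_compact \<F> X T)
            \<longrightarrow> has_fip \<F>)"
proof (intro conjI impI allI)
  fix X :: "'a::metric_space set" and T
  assume "has_fip \<F>" "dynamical_system X T"
  then show "dynamically_compact \<F> X T" by (rule part1)
next
  assume "\<forall>(X :: (nat \<Rightarrow> real) set) T. dynamical_system X T \<longrightarrow> dynamically_compact \<F> X T"
  then show "has_fip \<F>" by (rule part2)
qed

end
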